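(* Let $b\ge2$, $n\ge1$ be integers, $\mathcal D=\{d,\dots,d+b-1\}$ a set of consecutive integers containing $0$, $s$ the minimal element and $m$ the size of $\Omega_n(b,\mathcal D)$, and $l=d/(b-1)$. Let $p=1/\{(n-1)(-l)\}$ if $(n-1)l\notin\mathbb Z$ and $p=1$ if $(n-1)l\in\mathbb Z$, where $\{x\}=x-\lfloor x\rfloor$. Then $(b-1)/p$ is a positive integer and for $0\le i,j\le m-1$, $$\tilde p_{i,j}=\frac{1}{b^n}\sum_{r=0}^{j}(-1)^r\binom{n+1}{r}\binom{n+b(j-r)+\frac{b-1}{p}-i}{n},$$ where $\binom{N}{n}=0$ for integers $0\le N<n$.
   Context: Carries process over $(b,\mathcal D)$: let $\{X_{k,i}\}_{1\le k\le n,\ i\ge 0}$ be independent random variables, each uniformly distributed on $\mathcal D$. Set $C_0=0$; for $i\ge 0$ let $A_i$ be the unique element of $\mathcal D$ with $A_i\equiv C_i+X_{1,i}+\dots+X_{n,i}\pmod b$, and set $C_{i+1}=(C_i+X_{1,i}+\dots+X_{n,i}-A_i)/b$. The state space $\Omega_n(b,\mathcal D)$ is the set of integers $c$ with $\Pr(C_i=c)>0$ for some $i\ge0$; it is a set of consecutive integers. $\tilde p_{i,j}=\Pr(C_{t+1}=j+s\mid C_t=i+s)$. *)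

theory Defs
  imports "HOL-Probability.Probability"
begin

definition digit_set :: "nat \<Rightarrow> int \<Rightarrow> int set" where
  "digit_set b d = {d .. d + int b - 1}"

definition digit_of :: "nat \<Rightarrow> int \<Rightarrow> int \<Rightarrow> int" where
  "digit_of b d v = (THE a. a \<in> digit_set b d \<and> a mod int b = v mod int b)"

text \<open>One carry step: from carry c and digits x_1..x_n (indexed 0..n-1) to the next carry.\<close>
definition carry_step :: "nat \<Rightarrow> int \<Rightarrow> nat \<Rightarrow> int \<Rightarrow> (nat \<Rightarrow> int) \<Rightarrow> int" where
  "carry_step b d n c x =
     (let v = c + (\<Sum>k<n. x k) in (v - digit_of b d v) div int b)"

definition digits_pmf :: "nat \<Rightarrow> int \<Rightarrow> nat \<Rightarrow> (nat \<Rightarrow> int) pmf" where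
  "digits_pmf b d n = pmf_of_set ({0..<n} \<rightarrow>\<^sub>E digit_set b d)"

definition carry_trans :: "nat \<Rightarrow> int \<Rightarrow> nat \<Rightarrow> int \<Rightarrow> int pmf" where
  "carry_trans b d n c = map_pmf (carry_step b d n c) (digits_pmf b d n)"

fun carry_dist :: "nat \<Rightarrow> int \<Rightarrow> nat \<Rightarrow> nat \<Rightarrow> int pmf" where
  "carry_dist b d n 0 = return_pmf 0"
| "carry_dist b d n (Suc i) = bind_pmf (carry_dist b d n i) (carry_trans b d n)"

definition carry_states :: "nat \<Rightarrow> int \<Rightarrow> nat \<Rightarrow> int set" where
  "carry_states b d n = {c. \<exists>i. pmf (carry_dist b d n i) c > 0}"

definition fracpart :: "real \<Rightarrow> real" where
  "fracpart x = x - of_int \<lfloor>x\<rfloor>"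

end

theory Submission
  imports Defs
begin

definition cntD :: "nat \<Rightarrow> int \<Rightarrow> nat \<Rightarrow> int \<Rightarrow> nat" where
  "cntD b d k T = card {x \<in> {0..<k} \<rightarrow>\<^sub>E digit_set b d. (\<Sum>i<k. x i) = T}"

lemma finite_digit_set[simp]: "finite (digit_set b d)"
  by (simp add: digit_set_def)

lemma cntD_0: "cntD b d 0 T = (if T = 0 then 1 else 0)"
  by (simp add: cntD_def)

lemma cntD_Suc: "cntD b d (Suc k) T = (\<Sum>y\<in>digit_set b d. cntD b d k (T - y))"
proof -
  define D where "D = digit_set b d"
  define P where "P = {0..<k} \<rightarrow>\<^sub>E D"
  define f where "f = (\<lambda>(y::int, g::nat\<Rightarrow>int). g(k := y))"
  have ins: "{0..<Suc k} = insert k {0..<k}" by auto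
  have sumf: "(\<Sum>i<Suc k. f z i) = fst z + (\<Sum>i<k. snd z i)" for z
    by (cases z) (simp add: f_def)
  have "{x \<in> {0..<Suc k} \<rightarrow>\<^sub>E D. (\<Sum>i<Suc k. x i) = T}
        = f ` {z \<in> D \<times> P. fst z + (\<Sum>i<k. snd z i) = T}"
  proof (intro set_eqI iffI)
    fix x assume x: "x \<in> {x \<in> {0..<Suc k} \<rightarrow>\<^sub>E D. (\<Sum>i<Suc k. x i) = T}"
    then have "x \<in> f ` (D \<times> P)" unfolding ins PiE_insert_eq P_def f_def by auto
    then obtain z where z: "z \<in> D \<times> P" "x = f z" by auto
    then show "x \<in> f ` {z \<in> D \<times> P. fst z + (\<Sum>i<k. snd z i) = T}"
      using x sumf[of z] by auto
  next
    fix x assume "x \<in> f ` {z \<in> D \<times> P. fst z + (\<Sum>i<k. snd z i) = T}"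
    then obtain z where z: "z \<in> D \<times> P" "fst z + (\<Sum>i<k. snd z i) = T" "x = f z" by auto
    have "x \<in> {0..<Suc k} \<rightarrow>\<^sub>E D" unfolding ins PiE_insert_eq P_def f_def
      using z(1,3) P_def f_def by auto
    then show "x \<in> {x \<in> {0..<Suc k} \<rightarrow>\<^sub>E D. (\<Sum>i<Suc k. x i) = T}"
      using z sumf[of z] by auto
  qed
  moreover have "inj_on f (D \<times> P)"
    unfolding f_def P_def using inj_combinator[of k "{0..<k}" "\<lambda>_. D"] by simp
  hence "inj_on f {z \<in> D \<times> P. fst z + (\<Sum>i<k. snd z i) = T}"
    by (rule inj_on_subset) auto
  moreover have "{z \<in> D \<times> P. fst z + (\<Sum>i<k. snd z i) = T}
      = (SIGMA y:D. {g \<in> P. (\<Sum>i<k. g i) = T - y})" by auto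
  moreover have "finite P" unfolding P_def D_def by (intro finite_PiE) auto
  ultimately show ?thesis
    unfolding cntD_def D_def[symmetric] P_def[symmetric]
    by (simp add: card_image D_def)
qed

fun Nf :: "nat \<Rightarrow> nat \<Rightarrow> int \<Rightarrow> int" where
  "Nf b 0 T = (if T = 0 then 1 else 0)"
| "Nf b (Suc k) T = (\<Sum>a<b. Nf b k (T - int a))"

lemma digit_set_reindex: "digit_set b d = (\<lambda>a. d + int a) ` {..<b}"
proof (intro set_eqI iffI)
  fix x assume "x \<in> digit_set b d"
  then have "d \<le> x" "x \<le> d + int b - 1" by (auto simp: digit_set_def)
  then show "x \<in> (\<lambda>a. d + int a) ` {..<b}"
    by (intro image_eqI[of _ _ "nat (x - d)"]) auto
qed (auto simp: digit_set_def)


lemma cntD_Nf: "int (cntD b d k T) = Nf b k (T - int k * d)"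
proof (induction k arbitrary: T)
  case 0 then show ?case by (simp add: cntD_0)
next
  case (Suc k)
  have "int (cntD b d (Suc k) T) = (\<Sum>y\<in>digit_set b d. Nf b k (T - y - int k * d))"
    by (simp add: cntD_Suc Suc)
  also have "\<dots> = (\<Sum>a<b. Nf b k (T - (d + int a) - int k * d))"
    unfolding digit_set_reindex by (subst sum.reindex) (auto simp: inj_on_def)
  also have "\<dots> = Nf b (Suc k) (T - int (Suc k) * d)"
    by (simp add: algebra_simps)
  finally show ?case .
qed


definition hh :: "nat \<Rightarrow> int \<Rightarrow> int" where
  "hh k t = (if t \<ge> 0 then int ((nat t + k) choose k) else 0)"

lemma hh_diff: "hh (Suc k) t - hh (Suc k) (t - 1) = hh k t"
proof (cases "t \<ge> 1")
  case True
  define u where "u = nat (t - 1)"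
  have u: "nat t = Suc u" using True unfolding u_def by arith
  then have "nat (t - 1) = u" by simp
  then show ?thesis using True u by (simp add: hh_def)
next
  case False
  then show ?thesis by (cases "t = 0") (auto simp: hh_def)
qed

lemma hh_tele: "(\<Sum>a<b. hh k (t - int a)) = hh (Suc k) t - hh (Suc k) (t - int b)"
proof (induction b)
  case 0 then show ?case by simp
next
  case (Suc b)
  have "hh (Suc k) (t - int b) - hh (Suc k) (t - int b - 1) = hh k (t - int b)"
    by (rule hh_diff)
  then show ?case using Suc by (simp add: algebra_simps)
qed

lemma pascal_alt:
  fixes g :: "nat \<Rightarrow> int"
  shows "(\<Sum>r\<le>m. (-1)^r * int (m choose r) * (g r - g (Suc r)))
       = (\<Sum>r\<le>Suc m. (-1)^r * int (Suc m choose r) * g r)"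
proof -
  have A: "(\<Sum>r\<le>Suc m. (-1)^r * int (m choose r) * g r) = (\<Sum>r\<le>m. (-1)^r * int (m choose r) * g r)"
    by simp
  have B: "(\<Sum>r\<le>Suc m. (-1)^r * int (m choose r) * g r)
      = g 0 + (\<Sum>r\<le>m. (-1)^(Suc r) * int (m choose Suc r) * g (Suc r))"
    by (subst sum.atMost_Suc_shift) simp
  have "(\<Sum>r\<le>Suc m. (-1)^r * int (Suc m choose r) * g r)
      = g 0 + (\<Sum>r\<le>m. (-1)^(Suc r) * int (Suc m choose Suc r) * g (Suc r))"
    by (subst sum.atMost_Suc_shift) simp
  also have "\<dots> = g 0 + (\<Sum>r\<le>m. (-1)^(Suc r) * int (m choose Suc r) * g (Suc r))
                     - (\<Sum>r\<le>m. (-1)^r * int (m choose r) * g (Suc r))"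
  proof -
    have "(\<Sum>r\<le>m. (-1)^(Suc r) * int (Suc m choose Suc r) * g (Suc r))
       = (\<Sum>r\<le>m. (-1)^(Suc r) * int (m choose Suc r) * g (Suc r) - (-1)^r * int (m choose r) * g (Suc r))"
      by (rule sum.cong) (simp_all add: algebra_simps)
    then show ?thesis by (simp add: sum_subtractf)
  qed
  also have "\<dots> = (\<Sum>r\<le>m. (-1)^r * int (m choose r) * g r) - (\<Sum>r\<le>m. (-1)^r * int (m choose r) * g (Suc r))"
    using A B by linarith
  also have "\<dots> = (\<Sum>r\<le>m. (-1)^r * int (m choose r) * (g r - g (Suc r)))"
    by (simp add: sum_subtractf algebra_simps)
  finally show ?thesis by simp
qed

lemma Nf_closed: "Nf b (Suc k) T = (\<Sum>r\<le>Suc k. (-1)^r * int (Suc k choose r) * hh k (T - int b * int r))"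
proof (induction k arbitrary: T)
  case 0
  have "(\<Sum>a<b. (if T - int a = 0 then 1 else 0)) = hh 0 T - hh 0 (T - int b)" for b
  proof (induction b)
    case (Suc b)
    then show ?case by (auto simp: hh_def)
  qed simp
  then show ?case by (simp add: hh_def)
next
  case (Suc k)
  have "Nf b (Suc (Suc k)) T = (\<Sum>a<b. Nf b (Suc k) (T - int a))" by (rule Nf.simps)
  also have "\<dots> = (\<Sum>a<b. \<Sum>r\<le>Suc k. (-1)^r * int (Suc k choose r) * hh k (T - int a - int b * int r))"
    by (rule sum.cong[OF refl]) (rule Suc.IH)
  also have "\<dots> = (\<Sum>r\<le>Suc k. (-1)^r * int (Suc k choose r) * (\<Sum>a<b. hh k (T - int b * int r - int a)))"
    by (subst sum.swap) (simp add: sum_distrib_left algebra_simps)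
  also have "\<dots> = (\<Sum>r\<le>Suc k. (-1)^r * int (Suc k choose r) *
       (hh (Suc k) (T - int b * int r) - hh (Suc k) (T - int b * int (Suc r))))"
    by (intro sum.cong refl, subst hh_tele) (simp add: algebra_simps)
  also have "\<dots> = (\<Sum>r\<le>Suc (Suc k). (-1)^r * int (Suc (Suc k) choose r) * hh (Suc k) (T - int b * int r))"
    by (rule pascal_alt[where g = "\<lambda>r. hh (Suc k) (T - int b * int r)"])
  finally show ?case .
qed


lemma div_eq_iff_int: "0 < (b::int) \<Longrightarrow> (y div b = q) = (b*q \<le> y \<and> y < b*q + b)"
  by (smt (verit, ccfv_SIG) int_div_pos_eq le_add_diff_inverse
    minus_mult_div_eq_mod pos_mod_bound pos_mod_sign)

lemma digit_set_iff: "x \<in> digit_set b d \<longleftrightarrow> d \<le> x \<and> x \<le> d + int b - 1"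
  by (simp add: digit_set_def)

lemma digit_of_eq:
  assumes "b > 0" shows "digit_of b d v = d + (v - d) mod int b"
  unfolding digit_of_def
proof (rule the_equality)
  show "d + (v - d) mod int b \<in> digit_set b d \<and> (d + (v - d) mod int b) mod int b = v mod int b"
  proof
    have "0 \<le> (v - d) mod int b" "(v - d) mod int b < int b" using assms by simp_all
    then show "d + (v - d) mod int b \<in> digit_set b d" by (simp add: digit_set_iff)
    have "(d + (v - d) mod int b) mod int b = (d + (v - d)) mod int b" by (rule mod_add_right_eq)
    then show "(d + (v - d) mod int b) mod int b = v mod int b" by simp
  qed
next
  fix a assume a: "a \<in> digit_set b d \<and> a mod int b = v mod int b"
  then have "(a - d) mod int b = (v - d) mod int b" by (metis mod_diff_cong)
  moreover have "(a - d) mod int b = a - d" using a assms by (intro mod_pos_pos_trivial) (auto simp: digit_set_iff)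
  ultimately show "a = d + (v - d) mod int b" by simp
qed

lemma carry_step_eq:
  assumes "b > 0" shows "carry_step b d n c x = (c + (\<Sum>k<n. x k) - d) div int b"
proof -
  define v where "v = c + (\<Sum>k<n. x k)"
  have "v - d = int b * ((v - d) div int b) + (v - d) mod int b" by simp
  moreover have "digit_of b d v = d + (v - d) mod int b" by (rule digit_of_eq[OF assms])
  ultimately have "v - digit_of b d v = int b * ((v - d) div int b)"
    by linarith
  then show ?thesis unfolding carry_step_def v_def[symmetric] Let_def using assms by simp
qed

lemma PiE_ne: "b > 0 \<Longrightarrow> ({0..<(n::nat)} \<rightarrow>\<^sub>E digit_set b d) \<noteq> {}"
  by (auto simp: PiE_eq_empty_iff digit_set_def)

lemma finite_A: "finite ({0..<(n::nat)} \<rightarrow>\<^sub>E digit_set b d)"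
  using finite_PiE[of "{0..<n}" "\<lambda>_. digit_set b d"] by (simp add: digit_set_def)

lemma set_trans:
  assumes "b > 0"
  shows "set_pmf (carry_trans b d n c) = (\<lambda>x. (c + (\<Sum>k<n. x k) - d) div int b) ` ({0..<n} \<rightarrow>\<^sub>E digit_set b d)"
  unfolding carry_trans_def digits_pmf_def
  using assms by (simp add: carry_step_eq set_pmf_of_set[OF PiE_ne[OF assms] finite_A])

lemma states_iff: "c \<in> carry_states b d n \<longleftrightarrow> (\<exists>i. c \<in> set_pmf (carry_dist b d n i))"
  by (simp add: carry_states_def set_pmf_iff order_less_le)

lemma states_invariant:
  assumes "P 0" and "\<And>c c'. P c \<Longrightarrow> c' \<in> set_pmf (carry_trans b d n c) \<Longrightarrow> P c'"
    and "c \<in> carry_states b d n"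
  shows "P c"
proof -
  have "\<forall>c\<in>set_pmf (carry_dist b d n i). P c" for i
    by (induction i) (use assms(1,2) in auto)
  then show ?thesis using assms(3) by (auto simp: states_iff)
qed

lemma states_step:
  assumes "c \<in> carry_states b d n" "c' \<in> set_pmf (carry_trans b d n c)"
  shows "c' \<in> carry_states b d n"
proof -
  obtain i where "c \<in> set_pmf (carry_dist b d n i)" using assms(1) by (auto simp: states_iff)
  then have "c' \<in> set_pmf (carry_dist b d n (Suc i))" using assms(2) by auto
  then show ?thesis unfolding states_iff by blast
qed

lemma states_0: "0 \<in> carry_states b d n"
proof -
  have "0 \<in> set_pmf (carry_dist b d n 0)" by simp
  then show ?thesis unfolding states_iff by blast
qed

lemma card_digit_set: "card (digit_set b d) = b"
  by (simp add: digit_set_def)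

lemma pmf_trans:
  assumes "b > 0"
  shows "pmf (carry_trans b d n c) c' =
    real (card {x \<in> {0..<n} \<rightarrow>\<^sub>E digit_set b d. (c + (\<Sum>k<n. x k) - d) div int b = c'}) / real b ^ n"
proof -
  have C: "card ({0..<n} \<rightarrow>\<^sub>E digit_set b d) = b ^ n"
    by (simp add: card_PiE card_digit_set)
  have E: "({0..<n} \<rightarrow>\<^sub>E digit_set b d) \<inter> (carry_step b d n c -` {c'})
     = {x \<in> {0..<n} \<rightarrow>\<^sub>E digit_set b d. (c + (\<Sum>k<n. x k) - d) div int b = c'}"
    using assms by (auto simp: carry_step_eq)
  have "pmf (carry_trans b d n c) c' = measure (pmf_of_set ({0..<n} \<rightarrow>\<^sub>E digit_set b d)) (carry_step b d n c -` {c'})"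
    unfolding carry_trans_def digits_pmf_def by (rule pmf_map)
  also have "\<dots> = real (card (({0..<n} \<rightarrow>\<^sub>E digit_set b d) \<inter> (carry_step b d n c -` {c'}))) / real (card ({0..<n} \<rightarrow>\<^sub>E digit_set b d))"
    by (rule measure_pmf_of_set[OF PiE_ne[OF assms] finite_A])
  also have "\<dots> = real (card {x \<in> {0..<n} \<rightarrow>\<^sub>E digit_set b d. (c + (\<Sum>k<n. x k) - d) div int b = c'}) / real b ^ n"
    by (simp only: C E of_nat_power)
  finally show ?thesis .
qed

lemma window_count:
  assumes "b > 0"
  shows "int (card {x \<in> {0..<n} \<rightarrow>\<^sub>E digit_set b d. (c + (\<Sum>k<n. x k) - d) div int b = c'})
       = Nf b (Suc n) (int b * c' - c + d + int b - 1 - int n * d)"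
proof -
  define L where "L = int b * c' - c + d"
  define S where "S = (\<lambda>a::nat. {x \<in> {0..<n} \<rightarrow>\<^sub>E digit_set b d. (\<Sum>k<n. x k) = L + int b - 1 - int a})"
  have eq: "{x \<in> {0..<n} \<rightarrow>\<^sub>E digit_set b d. (c + (\<Sum>k<n. x k) - d) div int b = c'} = (\<Union>a<b. S a)"
  proof (intro set_eqI iffI)
    fix x assume "x \<in> {x \<in> {0..<n} \<rightarrow>\<^sub>E digit_set b d. (c + (\<Sum>k<n. x k) - d) div int b = c'}"
    then have x: "x \<in> {0..<n} \<rightarrow>\<^sub>E digit_set b d" "int b * c' \<le> c + (\<Sum>k<n. x k) - d"
        "c + (\<Sum>k<n. x k) - d < int b * c' + int b"
      using div_eq_iff_int[of "int b"] assms by auto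
    define a where "a = nat (L + int b - 1 - (\<Sum>k<n. x k))"
    have "a < b" "(\<Sum>k<n. x k) = L + int b - 1 - int a" using x unfolding a_def L_def by auto
    then show "x \<in> (\<Union>a<b. S a)" using x unfolding S_def by auto
  next
    fix x assume "x \<in> (\<Union>a<b. S a)"
    then obtain a where a: "a < b" "x \<in> {0..<n} \<rightarrow>\<^sub>E digit_set b d" "(\<Sum>k<n. x k) = L + int b - 1 - int a"
      unfolding S_def by auto
    then show "x \<in> {x \<in> {0..<n} \<rightarrow>\<^sub>E digit_set b d. (c + (\<Sum>k<n. x k) - d) div int b = c'}"
      using div_eq_iff_int[of "int b"] assms unfolding L_def by auto
  qed
  have "card (\<Union>a<b. S a) = (\<Sum>a<b. card (S a))"
    by (rule card_UN_disjoint) (auto simp: S_def finite_A)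
  then have "int (card (\<Union>a<b. S a)) = (\<Sum>a<b. int (cntD b d n (L + int b - 1 - int a)))"
    by (simp add: S_def cntD_def)
  also have "\<dots> = (\<Sum>a<b. Nf b n (L + int b - 1 - int n * d - int a))"
    by (simp add: cntD_Nf algebra_simps)
  also have "\<dots> = Nf b (Suc n) (L + int b - 1 - int n * d)" by simp
  finally show ?thesis using eq unfolding L_def by simp
qed


lemma mod_char: "0 < (m::int) \<Longrightarrow> 0 \<le> r \<Longrightarrow> r < m \<Longrightarrow> (m*q + r) mod m = r"
  by simp

lemma div_lt: "0 < (b::int) \<Longrightarrow> y < b * u \<Longrightarrow> y div b < u"
proof -
  assume b: "0 < b" and y: "y < b * u"
  have "b * (y div b) \<le> y" using div_eq_iff_int[OF b, of y "y div b"] by simp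
  then have "b * (y div b) < b * u" using y by linarith
  then show ?thesis using b by (simp add: mult_less_cancel_left_pos)
qed

lemma div_ge: "0 < (b::int) \<Longrightarrow> b * u \<le> y \<Longrightarrow> u \<le> y div b"
proof -
  assume b: "0 < (b::int)" and y: "b * u \<le> y"
  have "(b * u) div b \<le> y div b" using zdiv_mono1[OF y b] .
  then show ?thesis using b by simp
qed

lemma sum_bounds:
  assumes "x \<in> {0..<n} \<rightarrow>\<^sub>E digit_set b d"
  shows "int n * d \<le> (\<Sum>k<n. x k)" "(\<Sum>k<n. x k) \<le> int n * d + int n * (int b - 1)"
proof -
  have x: "d \<le> x k \<and> x k \<le> d + int b - 1" if "k < n" for k
    using assms that by (auto simp: PiE_iff digit_set_iff)
  have "(\<Sum>k<n. d) \<le> (\<Sum>k<n. x k)" by (intro sum_mono) (use x in auto)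
  then show "int n * d \<le> (\<Sum>k<n. x k)" by simp
  have x2: "x k \<le> d + (int b - 1)" if "k < n" for k using x[OF that] by linarith
  have "(\<Sum>k<n. x k) \<le> (\<Sum>k<n. d + (int b - 1))" by (intro sum_mono) (use x2 in auto)
  then show "(\<Sum>k<n. x k) \<le> int n * d + int n * (int b - 1)" by (simp add: algebra_simps)
qed

locale cset =
  fixes b n :: nat and d :: int
  assumes b2: "b \<ge> 2" and n1: "n \<ge> 1" and zD: "0 \<in> digit_set b d"
begin

definition "e = - d"
definition "B1 = int b - 1"
definition "X = int (n - 1) * e"
definition "K = (X - 1) mod B1 + 1"
definition "Q = (X - 1) div B1"
definition "s0 = - Q - 1"
definition "U = s0 + int n + K"

lemma B1_pos: "B1 \<ge> 1" using b2 by (simp add: B1_def)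
lemma b_pos: "int b > 0" using b2 by simp
lemma e_bounds: "0 \<le> e" "e \<le> B1" using zD by (auto simp: digit_set_iff e_def B1_def)
lemma X_nonneg: "0 \<le> X" using e_bounds by (simp add: X_def)
lemma X_le: "X \<le> int (n - 1) * B1"
  unfolding X_def using e_bounds by (intro mult_left_mono) auto
lemma K_bounds: "1 \<le> K" "K \<le> B1"
proof -
  have "0 < B1" using B1_pos by simp
  then have "(X - 1) mod B1 < B1" "0 \<le> (X - 1) mod B1" by simp_all
  then show "1 \<le> K" "K \<le> B1" unfolding K_def by linarith+
qed
lemma X_decomp: "X - 1 = B1 * Q + (K - 1)"
  by (simp add: K_def Q_def)
lemma B1s0: "B1 * s0 = K - X - B1"
  using X_decomp by (simp add: s0_def algebra_simps)
lemma b_eq: "int b = B1 + 1" by (simp add: B1_def)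
lemma Xd: "int (n - 1) * d = - X" by (simp add: X_def e_def)
lemma nd: "int n * d = d - X"
proof -
  have h: "int n = int (n - 1) + 1" using n1 by simp
  have "int n * d = int (n - 1) * d + d" by (subst h) (simp add: distrib_right)
  then show ?thesis using Xd by linarith
qed

lemma s0_le0: "s0 \<le> 0"
proof -
  have "B1 * s0 \<le> 0" using B1s0 K_bounds X_nonneg by linarith
  then show ?thesis using B1_pos by (simp add: mult_le_0_iff)
qed

lemma U_pos: "0 \<le> U"
proof -
  have "B1 * U = B1 * s0 + B1 * int n + B1 * K" by (simp add: U_def algebra_simps)
  also have "int (n - 1) * B1 = B1 * int n - B1" using n1 by (simp add: algebra_simps of_nat_diff)
  then have "B1 * s0 + B1 * int n + B1 * K \<ge> K + B1 * K"
    using B1s0 X_le by linarith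
  finally have "B1 * U \<ge> K + B1 * K" .
  moreover have "B1 * K \<ge> 0" using B1_pos K_bounds by simp
  ultimately have "B1 * U \<ge> 0" using K_bounds by linarith
  then show ?thesis using B1_pos by (simp add: zero_le_mult_iff)
qed

lemma step_lower:
  assumes "s0 \<le> c" "x \<in> {0..<n} \<rightarrow>\<^sub>E digit_set b d"
  shows "s0 \<le> (c + (\<Sum>k<n. x k) - d) div int b"
proof (rule div_ge[OF b_pos])
  have "int b * s0 = s0 + B1 * s0" by (simp add: b_eq algebra_simps)
  then have "int b * s0 \<le> s0 - X" using B1s0 K_bounds by linarith
  then show "int b * s0 \<le> c + (\<Sum>k<n. x k) - d" using sum_bounds(1)[OF assms(2)] nd assms(1) by linarith
qed

lemma step_upper:
  assumes "c \<le> U" "x \<in> {0..<n} \<rightarrow>\<^sub>E digit_set b d"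
  shows "(c + (\<Sum>k<n. x k) - d) div int b \<le> U"
proof -
  have "(c + (\<Sum>k<n. x k) - d) div int b < U + 1"
  proof (rule div_lt[OF b_pos])
    have bU: "int b * (U + 1) = U + B1 * U + B1 + 1" by (simp add: b_eq algebra_simps)
    have "B1 * U = B1 * s0 + B1 * int n + B1 * K" by (simp add: U_def algebra_simps)
    moreover have "B1 * K \<ge> 0" using B1_pos K_bounds by simp
    moreover have "int n * (int b - 1) = B1 * int n" by (simp add: B1_def algebra_simps)
    ultimately show "c + (\<Sum>k<n. x k) - d < int b * (U + 1)"
      using sum_bounds(2)[OF assms(2)] nd assms(1) bU B1s0 K_bounds by linarith
  qed
  then show ?thesis by simp
qed

lemma states_sub: "carry_states b d n \<subseteq> {s0..U}"
proof
  fix c assume cin: "c \<in> carry_states b d n"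
  show "c \<in> {s0..U}"
  proof (rule states_invariant[where P = "\<lambda>c. c \<in> {s0..U}"])
    show "c \<in> carry_states b d n" by (rule cin)
    show "0 \<in> {s0..U}" using s0_le0 U_pos by simp
    fix c c' assume "c \<in> {s0..U}" "c' \<in> set_pmf (carry_trans b d n c)"
    then obtain x where x: "x \<in> {0..<n} \<rightarrow>\<^sub>E digit_set b d" "c' = (c + (\<Sum>k<n. x k) - d) div int b"
      using set_trans[of b d n c] b2 by auto
    show "c' \<in> {s0..U}" using step_lower[OF _ x(1), of c] step_upper[OF _ x(1), of c] x(2) \<open>c \<in> {s0..U}\<close>
      by simp
  qed
qed

lemma finite_states: "finite (carry_states b d n)"
  using states_sub finite_subset by blast

lemma s0_in: "s0 \<in> carry_states b d n"
proof -
  have "\<forall>c. c \<in> carry_states b d n \<longrightarrow> s0 \<in> carry_states b d n"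
  proof (intro allI)
    fix c show "c \<in> carry_states b d n \<longrightarrow> s0 \<in> carry_states b d n"
    proof (induction c rule: measure_induct_rule[of "\<lambda>c. nat (c - s0)"])
      case (less c)
      show ?case
      proof
        assume c: "c \<in> carry_states b d n"
        then have cs: "s0 \<le> c" using states_sub by auto
        show "s0 \<in> carry_states b d n"
        proof (cases "c = s0")
          case True then show ?thesis using c by simp
        next
          case False
          define x where "x = restrict (\<lambda>_. d) {0..<n}"
          have xA: "x \<in> {0..<n} \<rightarrow>\<^sub>E digit_set b d" using zD by (auto simp: x_def digit_set_iff)
          have sx: "(\<Sum>k<n. x k) = int n * d"
            by (simp add: x_def lessThan_atLeast0)
          define c1 where "c1 = (c + (\<Sum>k<n. x k) - d) div int b"
          have c1in: "c1 \<in> set_pmf (carry_trans b d n c)"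
          proof -
            have "set_pmf (carry_trans b d n c) = (\<lambda>x. (c + (\<Sum>k<n. x k) - d) div int b) ` ({0..<n} \<rightarrow>\<^sub>E digit_set b d)"
              using set_trans[of b d n c] b2 by simp
            then show ?thesis unfolding c1_def using xA by blast
          qed
          have "s0 \<le> c1" unfolding c1_def using step_lower[OF cs xA] .
          moreover have "c1 < c"
            unfolding c1_def
          proof (rule div_lt[OF b_pos])
            have "B1 * c \<ge> B1 * (s0 + 1)" using False cs B1_pos by (intro mult_left_mono) auto
            then have "B1 * c \<ge> K - X" using B1s0 by (simp add: algebra_simps)
            moreover have "int b * c = B1 * c + c" by (simp add: b_eq algebra_simps)
            ultimately show "c + (\<Sum>k<n. x k) - d < int b * c"
              using sx nd K_bounds by linarith
          qed
          ultimately have "nat (c1 - s0) < nat (c - s0)" by simp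
          moreover have "c1 \<in> carry_states b d n" using states_step[OF c c1in] .
          ultimately show ?thesis using less by blast
        qed
      qed
    qed
  qed
  then show ?thesis using states_0 by blast
qed

lemma s_eq: "Min (carry_states b d n) = s0"
  using finite_states s0_in states_sub by (intro Min_eqI) auto

lemma m_le: "card (carry_states b d n) \<le> n + nat K + 1"
proof -
  have "card (carry_states b d n) \<le> card {s0..U}" using states_sub by (intro card_mono) auto
  also have "\<dots> = n + nat K + 1" using K_bounds by (simp add: U_def)
  finally show ?thesis .
qed

end


lemma hh_real:
  assumes "0 \<le> t + int n"
  shows "real_of_int (hh n t) = (real_of_int (t + int n)) gchoose n"
proof -
  define N where "N = nat (t + int n)"
  have N: "real_of_int (t + int n) = real N" using assms by (simp add: N_def)
  have G: "real (N choose n) = real N gchoose n" by (rule binomial_gbinomial)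
  show ?thesis
  proof (cases "t \<ge> 0")
    case True
    then have "N = nat t + n" by (simp add: N_def)
    then have "real_of_int (hh n t) = real (N choose n)" using True by (simp add: hh_def)
    then show ?thesis using N G by simp
  next
    case False
    then have "N < n" using assms by (simp add: N_def)
    then have "real (N choose n) = 0" by simp
    then show ?thesis using False N G by (simp add: hh_def)
  qed
qed

lemma final_sum:
  fixes b n j i :: nat and K :: int
  assumes K1: "1 \<le> K" and K2: "K \<le> int b - 1" and iK: "int i \<le> int n + K"
  shows "real_of_int (Nf b (Suc n) (int b * int j + K - int i)) =
    (\<Sum>r = 0..j. (-1) ^ r * real ((n + 1) choose r) *
       ((real n + real b * (real j - real r) + real_of_int K - real i) gchoose n))"
proof -
  define T where "T = int b * int j + K - int i"
  define F where "F = (\<lambda>r. (-1) ^ r * real ((n + 1) choose r) * real_of_int (hh n (T - int b * int r)))"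
  have s1: "real_of_int (Nf b (Suc n) T) = (\<Sum>r\<le>Suc n. F r)"
    unfolding Nf_closed F_def by simp
  have s2: "(\<Sum>r\<le>Suc n. F r) = (\<Sum>r\<le>Suc n + j. F r)"
    by (rule sum.mono_neutral_left) (auto simp: F_def)
  have s3: "(\<Sum>r = 0..j. (-1) ^ r * real ((n + 1) choose r) *
       ((real n + real b * (real j - real r) + real_of_int K - real i) gchoose n)) = (\<Sum>r = 0..j. F r)"
  proof (rule sum.cong[OF refl])
    fix r assume r: "r \<in> {0..j}"
    then have "int b * int r \<le> int b * int j" by (intro mult_left_mono) auto
    then have nn: "0 \<le> T - int b * int r + int n" unfolding T_def using iK by linarith
    have eqa: "real n + real b * (real j - real r) + real_of_int K - real i = real_of_int (T - int b * int r + int n)"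
      unfolding T_def by (simp add: algebra_simps)
    show "(-1) ^ r * real ((n + 1) choose r) *
       ((real n + real b * (real j - real r) + real_of_int K - real i) gchoose n) = F r"
      by (simp only: F_def eqa hh_real[OF nn])
  qed
  have s4: "(\<Sum>r = 0..j. F r) = (\<Sum>r\<le>Suc n + j. F r)"
  proof (rule sum.mono_neutral_left)
    show "\<forall>r\<in>{..Suc n + j} - {0..j}. F r = 0"
    proof
      fix r assume "r \<in> {..Suc n + j} - {0..j}"
      then have "Suc j \<le> r" by auto
      then have "int b * int (Suc j) \<le> int b * int r" by (intro mult_left_mono) auto
      then have "T - int b * int r < 0" unfolding T_def using K2 by (simp add: algebra_simps)
      then show "F r = 0" by (simp add: F_def hh_def)
    qed
  qed auto
  show ?thesis using s1 s2 s3 s4 unfolding T_def by simp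
qed

context cset begin

lemma Kp: "(real b - 1) / (if (real n - 1) * (real_of_int d / (real b - 1)) \<in> \<int> then 1
      else 1 / fracpart ((real n - 1) * (- (real_of_int d / (real b - 1))))) = real_of_int K"
proof -
  have B1p: "0 < B1" using B1_pos by simp
  have rB1: "real b - 1 = real_of_int B1" by (simp add: B1_def)
  have rn: "real n - 1 = real (n - 1)" using n1 by (simp add: of_nat_diff)
  have rX: "(real n - 1) * (real_of_int d / (real b - 1)) = - real_of_int X / real_of_int B1"
    unfolding rB1 rn by (simp add: X_def e_def)
  have rX2: "(real n - 1) * (- (real_of_int d / (real b - 1))) = real_of_int X / real_of_int B1"
    unfolding rB1 rn by (simp add: X_def e_def)
  show ?thesis
  proof (cases "B1 dvd X")
    case True
    then obtain w where w: "X = B1 * w" by (auto elim: dvdE)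
    have "- real_of_int X / real_of_int B1 = real_of_int (- w)" using B1p by (simp add: w)
    then have isint: "(real n - 1) * (real_of_int d / (real b - 1)) \<in> \<int>" unfolding rX by simp
    have e1: "X - 1 = B1 * (w - 1) + (B1 - 1)" by (simp add: w algebra_simps)
    have e2: "(B1 * (w - 1) + (B1 - 1)) mod B1 = B1 - 1" using B1p by (intro mod_char) auto
    have "(X - 1) mod B1 = B1 - 1" unfolding e1 by (rule e2)
    then have "K = B1" by (simp add: K_def)
    then show ?thesis using isint rB1 by simp
  next
    case False
    have notint: "(real n - 1) * (real_of_int d / (real b - 1)) \<notin> \<int>"
    proof
      assume H: "(real n - 1) * (real_of_int d / (real b - 1)) \<in> \<int>"
      from H[unfolded rX] obtain z where z: "- real_of_int X / real_of_int B1 = real_of_int z" by (rule Ints_cases)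
      then have "real_of_int (- X) = real_of_int (z * B1)" using B1p by (simp add: field_simps)
      then have "- X = z * B1" by (simp only: of_int_eq_iff)
      then have "B1 dvd X" by (metis dvd_minus_iff dvd_triv_right)
      then show False using False by simp
    qed
    define R where "R = X mod B1"
    have R: "1 \<le> R" "R < B1"
    proof -
      have "X mod B1 \<noteq> 0" using False by (simp add: dvd_eq_mod_eq_0)
      moreover have "0 \<le> X mod B1" "X mod B1 < B1" using B1p by simp_all
      ultimately show "1 \<le> R" "R < B1" unfolding R_def by linarith+
    qed
    have Xeq: "X = B1 * (X div B1) + R" by (simp add: R_def)
    have fp: "fracpart (real_of_int X / real_of_int B1) = real_of_int R / real_of_int B1"
    proof -
      have "\<lfloor>real_of_int X / real_of_int B1\<rfloor> = X div B1" by (rule floor_divide_of_int_eq)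
      moreover have "real_of_int X = real_of_int B1 * real_of_int (X div B1) + real_of_int R"
        using Xeq by (metis of_int_add of_int_mult)
      ultimately show ?thesis using B1p by (simp add: fracpart_def field_simps)
    qed
    have e1: "X - 1 = B1 * (X div B1) + (R - 1)" using Xeq by simp
    have e2: "(B1 * (X div B1) + (R - 1)) mod B1 = R - 1" using B1p R by (intro mod_char) auto
    have "(X - 1) mod B1 = R - 1" unfolding e1 by (rule e2)
    then have "K = R" by (simp add: K_def)
    moreover have "(real b - 1) / (1 / fracpart ((real n - 1) * (- (real_of_int d / (real b - 1))))) = real_of_int R"
      unfolding rX2 unfolding fp unfolding rB1 using B1p by simp
    ultimately show ?thesis using notint by simp
  qed
qed

end


theorem lemma2:
  fixes b n :: nat and d :: int
  assumes "b \<ge> 2" and "n \<ge> 1" and "0 \<in> digit_set b d"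
  defines "s \<equiv> Min (carry_states b d n)"
      and "m \<equiv> card (carry_states b d n)"
      and "l \<equiv> real_of_int d / (real b - 1)"
  defines "p \<equiv> (if (real n - 1) * l \<in> \<int> then 1
                else 1 / fracpart ((real n - 1) * (- l)))"
  shows "(\<exists>K::nat. K > 0 \<and> (real b - 1) / p = real K) \<and>
         (\<forall>i j. i \<le> m - 1 \<and> j \<le> m - 1 \<longrightarrow>
            pmf (carry_trans b d n (int i + s)) (int j + s) =
              1 / real b ^ n *
              (\<Sum>r = 0..j. (-1) ^ r * real ((n + 1) choose r) *
                 ((real n + real b * (real j - real r) + (real b - 1) / p - real i)
                    gchoose n)))"
proof -
  interpret cset b n d using assms(1-3) by unfold_locales
  have sS: "s = s0" unfolding s_def by (rule s_eq)
  have pK: "(real b - 1) / p = real_of_int K" unfolding p_def l_def by (rule Kp)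
  have part1: "\<exists>K'::nat. K' > 0 \<and> (real b - 1) / p = real K'"
    using K_bounds pK by (intro exI[of _ "nat K"]) simp
  have part2: "pmf (carry_trans b d n (int i + s)) (int j + s) =
              1 / real b ^ n *
              (\<Sum>r = 0..j. (-1) ^ r * real ((n + 1) choose r) *
                 ((real n + real b * (real j - real r) + (real b - 1) / p - real i)
                    gchoose n))"
    if ij: "i \<le> m - 1" for i j
  proof -
    have "m \<le> n + nat K + 1" unfolding m_def by (rule m_le)
    then have iK: "int i \<le> int n + K" using ij K_bounds by linarith
    have bp: "b > 0" using assms(1) by simp
    have arg: "int b * (int j + s0) - (int i + s0) + d + int b - 1 - int n * d = int b * int j + K - int i"
    proof -
      have "int b * (int j + s0) = int b * int j + B1 * s0 + s0" by (simp add: b_eq algebra_simps)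
      then show ?thesis using B1s0 nd b_eq by linarith
    qed
    have "pmf (carry_trans b d n (int i + s)) (int j + s) =
       real (card {x \<in> {0..<n} \<rightarrow>\<^sub>E digit_set b d. ((int i + s0) + (\<Sum>k<n. x k) - d) div int b = int j + s0}) / real b ^ n"
      unfolding sS by (rule pmf_trans[OF bp])
    also have "real (card {x \<in> {0..<n} \<rightarrow>\<^sub>E digit_set b d. ((int i + s0) + (\<Sum>k<n. x k) - d) div int b = int j + s0})
        = real_of_int (Nf b (Suc n) (int b * int j + K - int i))"
    proof -
      have W: "int (card {x \<in> {0..<n} \<rightarrow>\<^sub>E digit_set b d. ((int i + s0) + (\<Sum>k<n. x k) - d) div int b = int j + s0})
        = Nf b (Suc n) (int b * int j + K - int i)"
        unfolding arg[symmetric] by (rule window_count[OF bp])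
      show ?thesis unfolding W[symmetric] by (rule of_int_of_nat_eq[symmetric])
    qed
    also have "real_of_int (Nf b (Suc n) (int b * int j + K - int i)) =
        (\<Sum>r = 0..j. (-1) ^ r * real ((n + 1) choose r) *
       ((real n + real b * (real j - real r) + real_of_int K - real i) gchoose n))"
      using K_bounds iK by (intro final_sum) (auto simp: B1_def)
    finally show ?thesis unfolding pK by simp
  qed
  show ?thesis using part1 part2 by blast
qed


end
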